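(* Let $\langle\langle\cdot,\cdot\rangle\rangle$ be the $L_2$ set inner product $\langle\langle A,B\rangle\rangle=\int_{\mathbb{R}^n} h_A(x)h_B(x)\,d\phi(x)$ on $\mathcal{K}_n$. Then: (1) for all $A\in\mathcal{K}_n$, $k_A\in A$; (2) if $A,B\in\mathcal{K}_n$ are centered, then $\langle\langle A,B\rangle\rangle=0$ if and only if $A=\{0\}$ or $B=\{0\}$; (3) if $A,B\in\mathcal{K}_n$ with $0\in A\subseteq B$, then $\langle\langle A,A\rangle\rangle\leq\langle\langle B,B\rangle\rangle$.
   Context: A convex body is a closed, bounded, non-empty convex subset of $\mathbb{R}^n$; $\mathcal{K}_n$ is the set of convex bodies in $\mathbb{R}^n$. The support function of $A$ is $h_A(x)=\sup\{a\cdot x: a\in A\}$. $\phi$ is the standard Gaussian probability measure on $\mathbb{R}^n$. For this set inner product the induced inner product on singletons, $\langle a,b\rangle=\langle\langle\{a\},\{b\}\rangle\rangle$, is the usual dot product. The center of $A$ is the unique $k_A\in\mathbb{R}^n$ with $\langle\langle A,\{x\}\rangle\rangle=\langle k_A,x\rangle$ for all $x\in\mathbb{R}^n$; explicitly $k_A=\int z\,h_A(z)\,d\phi(z)$ (the Steiner point). $A$ is centered if $k_A=0$. *)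

theory Defs
  imports "HOL-Probability.Probability"
begin

definition convex_body :: "'a::euclidean_space set \<Rightarrow> bool" where
  "convex_body A \<longleftrightarrow> convex A \<and> compact A \<and> A \<noteq> {}"

definition supp :: "'a::euclidean_space set \<Rightarrow> 'a \<Rightarrow> real" where
  "supp A x = (SUP a\<in>A. a \<bullet> x)"

definition gauss_density :: "'a::euclidean_space \<Rightarrow> real" where
  "gauss_density x = (2 * pi) powr (- real DIM('a) / 2) * exp (- (norm x)\<^sup>2 / 2)"

definition gauss :: "'a::euclidean_space measure" where
  "gauss = density lborel (\<lambda>x. ennreal (gauss_density x))"

definition set_inner :: "'a::euclidean_space set \<Rightarrow> 'a set \<Rightarrow> real" where
  "set_inner A B = (\<integral>x. supp A x * supp B x \<partial>gauss)"

definition center :: "'a::euclidean_space set \<Rightarrow> 'a" where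
  "center A = (\<integral>z. supp A z *\<^sub>R z \<partial>gauss)"

end

theory Submission
  imports Defs
begin


lemma inner_le_R:
  fixes a x :: "'a::euclidean_space"
  assumes "norm a \<le> R"
  shows "a \<bullet> x \<le> R * norm x"
proof -
  have "a \<bullet> x \<le> norm a * norm x" using Cauchy_Schwarz_ineq2[of a x] by linarith
  also have "\<dots> \<le> R * norm x" using assms by (simp add: mult_right_mono)
  finally show ?thesis .
qed

lemma supp_upper:
  fixes A :: "'a::euclidean_space set"
  assumes "bounded A" "a \<in> A"
  shows "a \<bullet> x \<le> supp A x"
proof -
  obtain R where R: "\<forall>a\<in>A. norm a \<le> R" using assms(1) bounded_iff by blast
  have "bdd_above ((\<lambda>a. a \<bullet> x) ` A)"
  proof (rule bdd_aboveI2)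
    fix a assume "a \<in> A"
    then show "a \<bullet> x \<le> R * norm x"
      using R inner_le_R by blast
  qed
  then show ?thesis unfolding supp_def using assms(2) by (rule cSUP_upper2) simp
qed

lemma supp_least:
  fixes A :: "'a::euclidean_space set"
  assumes "A \<noteq> {}" "\<And>a. a \<in> A \<Longrightarrow> a \<bullet> x \<le> c"
  shows "supp A x \<le> c"
  unfolding supp_def using assms by (intro cSUP_least) auto

lemma supp_bound:
  fixes A :: "'a::euclidean_space set"
  assumes "bounded A" "A \<noteq> {}" "\<And>a. a \<in> A \<Longrightarrow> norm a \<le> R"
  shows "\<bar>supp A x\<bar> \<le> R * norm x"
proof -
  obtain a0 where a0: "a0 \<in> A" using assms(2) by blast
  have "supp A x \<le> R * norm x"
    using assms(2) apply (rule supp_least)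
    using assms(3) inner_le_R by blast
  moreover have "- (R * norm x) \<le> supp A x"
  proof -
    have "- (R * norm x) \<le> a0 \<bullet> x"
      using inner_le_R[OF assms(3)[OF a0], of "-x"] by simp
    also have "\<dots> \<le> supp A x" by (rule supp_upper[OF assms(1) a0])
    finally show ?thesis .
  qed
  ultimately show ?thesis by linarith
qed

lemma supp_add:
  fixes A :: "'a::euclidean_space set"
  assumes "bounded A" "A \<noteq> {}"
  shows "supp A (x + y) \<le> supp A x + supp A y"
  using assms(2) apply (rule supp_least)
  using supp_upper[OF assms(1)] by (smt (verit) inner_add_right)

lemma supp_scale:
  fixes A :: "'a::euclidean_space set"
  assumes "bounded A" "A \<noteq> {}" "c \<ge> 0"
  shows "supp A (c *\<^sub>R x) = c * supp A x"
proof (cases "c = 0")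
  case True
  obtain a0 where "a0 \<in> A" using assms(2) by blast
  have "supp A 0 = 0"
    using supp_upper[OF assms(1) \<open>a0 \<in> A\<close>, of 0] supp_least[OF assms(2), of 0 0] by simp
  then show ?thesis using True by simp
next
  case False
  then have c: "c > 0" using assms(3) by simp
  have "supp A (c *\<^sub>R x) \<le> c * supp A x"
    using assms(2) apply (rule supp_least)
    using supp_upper[OF assms(1)] c by (simp add: mult_left_mono)
  moreover have "supp A x \<le> supp A (c *\<^sub>R x) / c"
    using assms(2) apply (rule supp_least)
    using supp_upper[OF assms(1), of _ "c *\<^sub>R x"] c by (simp add: pos_le_divide_eq mult.commute)
  then have "c * supp A x \<le> supp A (c *\<^sub>R x)"
    using c by (simp add: pos_le_divide_eq mult.commute)
  ultimately show ?thesis by linarith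
qed

lemma supp_zero:
  fixes A :: "'a::euclidean_space set"
  assumes "bounded A" "A \<noteq> {}"
  shows "supp A 0 = 0"
  using supp_scale[OF assms, of 0 0] by simp

lemma supp_lipschitz:
  fixes A :: "'a::euclidean_space set"
  assumes "bounded A" "A \<noteq> {}" "\<And>a. a \<in> A \<Longrightarrow> norm a \<le> R"
  shows "\<bar>supp A x - supp A y\<bar> \<le> R * norm (x - y)"
proof -
  have "supp A x \<le> supp A y + supp A (x - y)"
    using supp_add[OF assms(1,2), of y "x - y"] by simp
  moreover have "supp A y \<le> supp A x + supp A (y - x)"
    using supp_add[OF assms(1,2), of x "y - x"] by simp
  moreover have "\<bar>supp A (x - y)\<bar> \<le> R * norm (x - y)" "\<bar>supp A (y - x)\<bar> \<le> R * norm (x - y)"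
    using supp_bound[OF assms, of "x - y"] supp_bound[OF assms, of "y - x"] by (auto simp: norm_minus_commute)
  ultimately show ?thesis by linarith
qed

lemma supp_cont:
  fixes A :: "'a::euclidean_space set"
  assumes "bounded A" "A \<noteq> {}"
  shows "continuous_on UNIV (supp A)"
proof -
  obtain R where R: "\<And>a. a \<in> A \<Longrightarrow> norm a \<le> R" using assms(1) bounded_iff by blast
  show ?thesis
  proof (rule lipschitz_on_continuous_on)
    show "(max R 0)-lipschitz_on UNIV (supp A)"
    proof (rule lipschitz_onI)
      fix x y :: 'a
      have "\<bar>supp A x - supp A y\<bar> \<le> R * norm (x - y)" by (rule supp_lipschitz[OF assms R])
      also have "\<dots> \<le> max R 0 * norm (x - y)" by (simp add: mult_right_mono)
      finally show "dist (supp A x) (supp A y) \<le> max R 0 * dist x y"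
        by (simp add: dist_norm dist_real_def)
    qed simp
  qed
qed

lemma supp_meas[measurable]:
  fixes A :: "'a::euclidean_space set"
  assumes "bounded A" "A \<noteq> {}"
  shows "supp A \<in> borel_measurable borel"
  using supp_cont[OF assms] by (rule borel_measurable_continuous_onI)



lemma norm_sq_sum:
  fixes x :: "'a::euclidean_space"
  shows "(norm x)\<^sup>2 = (\<Sum>b\<in>Basis. (x \<bullet> b)\<^sup>2)"
proof -
  have "(norm x)\<^sup>2 = x \<bullet> x" by (rule power2_norm_eq_inner)
  also have "\<dots> = (\<Sum>b\<in>Basis. x \<bullet> b * (x \<bullet> b))" by (rule euclidean_inner)
  also have "\<dots> = (\<Sum>b\<in>Basis. (x \<bullet> b)\<^sup>2)" by (simp add: power2_eq_square)
  finally show ?thesis .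
qed

lemma gd_prod:
  fixes x :: "'a::euclidean_space"
  shows "gauss_density x = (\<Prod>b\<in>Basis. std_normal_density (x \<bullet> b))"
proof -
  have n: "(2 * pi) powr (- real DIM('a) / 2) = (1 / sqrt (2 * pi)) ^ DIM('a)"
  proof -
    have "(1 / sqrt (2 * pi)) = (2 * pi) powr (-1/2)"
      by (simp add: powr_minus_divide powr_half_sqrt[symmetric] del: powr_minus)
    then have "(1 / sqrt (2 * pi)) ^ DIM('a) = ((2 * pi) powr (-1/2)) powr real DIM('a)"
      by (simp add: powr_realpow)
    also have "\<dots> = (2 * pi) powr (- real DIM('a) / 2)" by (simp add: powr_powr)
    finally show ?thesis by simp
  qed
  have e: "exp (- (norm x)\<^sup>2 / 2) = (\<Prod>b\<in>Basis. exp (- (x \<bullet> b)\<^sup>2 / 2))"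
  proof -
    have "(norm x)\<^sup>2 = (\<Sum>b\<in>Basis. (x \<bullet> b)\<^sup>2)"
      by (rule norm_sq_sum)
    then have "- (norm x)\<^sup>2 / 2 = (\<Sum>b\<in>Basis. - (x \<bullet> b)\<^sup>2 / 2)"
      by (simp add: sum_divide_distrib sum_negf)
    then show ?thesis by (simp add: exp_sum)
  qed
  have "(\<Prod>b\<in>Basis. std_normal_density (x \<bullet> b)) = (\<Prod>b\<in>(Basis::'a set). 1 / sqrt (2*pi)) * (\<Prod>b\<in>Basis. exp (- (x \<bullet> b)\<^sup>2 / 2))"
    unfolding std_normal_density_def by (rule prod.distrib)
  then show ?thesis
    unfolding gauss_density_def n e by simp
qed

lemma gd_pos: "gauss_density x > 0"
  by (simp add: gauss_density_def)

lemma gd_meas[measurable]: "gauss_density \<in> borel_measurable borel"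
  unfolding gauss_density_def[abs_def] by measurable

lemma sets_gauss[measurable_cong, simp]: "sets gauss = sets borel"
  by (simp add: gauss_def)

lemma space_gauss[simp]: "space gauss = UNIV"
  by (simp add: gauss_def)

lemma nn_std_normal: "(\<integral>\<^sup>+x. ennreal (std_normal_density x) \<partial>lborel) = 1"
proof -
  interpret prob_space "density lborel (\<lambda>x. ennreal (normal_density 0 1 x))"
    by (rule prob_space_normal_density) simp
  show ?thesis using emeasure_space_1 by (simp add: emeasure_density)
qed

lemma prob_gauss: "prob_space (gauss :: 'a::euclidean_space measure)"
proof
  have "emeasure (gauss :: 'a measure) (space gauss) = (\<integral>\<^sup>+x. ennreal (gauss_density (x::'a)) \<partial>lborel)"
    by (simp add: gauss_def emeasure_density)
  also have "\<dots> = (\<integral>\<^sup>+x. (\<Prod>b\<in>Basis. ennreal (std_normal_density ((x::'a) \<bullet> b))) \<partial>lborel)"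
    by (simp add: gd_prod prod_ennreal)
  also have "\<dots> = (\<Prod>b\<in>(Basis::'a set). (\<integral>\<^sup>+x. ennreal (std_normal_density x) \<partial>lborel))"
    by (rule nn_integral_lborel_prod) auto
  also have "\<dots> = 1" by (simp add: nn_std_normal)
  finally show "emeasure (gauss :: 'a measure) (space gauss) = 1" .
qed

lemma nn_quarter: "(\<integral>\<^sup>+x. ennreal (std_normal_density x * exp (x\<^sup>2 / 4)) \<partial>lborel) = ennreal (sqrt 2)"
proof -
  interpret prob_space "density lborel (\<lambda>x. ennreal (normal_density 0 (sqrt 2) x))"
    by (rule prob_space_normal_density) simp
  have 1: "(\<integral>\<^sup>+x. ennreal (normal_density 0 (sqrt 2) x) \<partial>lborel) = 1"
    using emeasure_space_1 by (simp add: emeasure_density)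
  have eq: "std_normal_density x * exp (x\<^sup>2 / 4) = sqrt 2 * normal_density 0 (sqrt 2) x" for x
  proof -
    have "exp (- x\<^sup>2 / 2) * exp (x\<^sup>2 / 4) = exp (- x\<^sup>2 / 4)"
      by (simp add: exp_add[symmetric])
    moreover have "1 / sqrt (2 * pi) = sqrt 2 * (1 / sqrt (2 * pi * (sqrt 2)\<^sup>2))"
      by (simp add: real_sqrt_mult field_simps)
    ultimately show ?thesis
      unfolding std_normal_density_def normal_density_def
      by (simp add: field_simps)
  qed
  show ?thesis
    by (simp add: eq ennreal_mult nn_integral_cmult 1)
qed

lemma integrable_quarter: "integrable (gauss :: 'a::euclidean_space measure) (\<lambda>y. exp ((norm y)\<^sup>2 / 4))"
proof (rule integrableI_nonneg)
  show "(\<lambda>y::'a. exp ((norm y)\<^sup>2 / 4)) \<in> borel_measurable gauss" by measurable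
  show "AE x in gauss. 0 \<le> exp ((norm (x::'a))\<^sup>2 / 4)" by simp
  have "(\<integral>\<^sup>+x. ennreal (exp ((norm (x::'a))\<^sup>2 / 4)) \<partial>gauss)
      = (\<integral>\<^sup>+x. ennreal (gauss_density x) * ennreal (exp ((norm (x::'a))\<^sup>2 / 4)) \<partial>lborel)"
    unfolding gauss_def by (rule nn_integral_density) auto
  also have "\<dots> = (\<integral>\<^sup>+x. (\<Prod>b\<in>Basis. ennreal (std_normal_density ((x::'a) \<bullet> b) * exp ((x \<bullet> b)\<^sup>2 / 4))) \<partial>lborel)"
  proof (rule nn_integral_cong)
    fix x :: 'a
    have "exp ((norm x)\<^sup>2 / 4) = (\<Prod>b\<in>Basis. exp ((x \<bullet> b)\<^sup>2 / 4))"
    proof -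
      have "(norm x)\<^sup>2 = (\<Sum>b\<in>Basis. (x \<bullet> b)\<^sup>2)"
        by (rule norm_sq_sum)
      then show ?thesis by (simp add: exp_sum sum_divide_distrib)
    qed
    then have "gauss_density x * exp ((norm x)\<^sup>2 / 4) =
        (\<Prod>b\<in>Basis. std_normal_density (x \<bullet> b) * exp ((x \<bullet> b)\<^sup>2 / 4))"
      by (simp add: gd_prod prod.distrib)
    then have "ennreal (gauss_density x * exp ((norm x)\<^sup>2 / 4)) =
        (\<Prod>b\<in>Basis. ennreal (std_normal_density (x \<bullet> b) * exp ((x \<bullet> b)\<^sup>2 / 4)))"
      by (simp add: prod_ennreal)
    then show "ennreal (gauss_density x) * ennreal (exp ((norm x)\<^sup>2 / 4)) =
        (\<Prod>b\<in>Basis. ennreal (std_normal_density (x \<bullet> b) * exp ((x \<bullet> b)\<^sup>2 / 4)))"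
      using gd_pos[of x] by (simp add: ennreal_mult)
  qed
  also have "\<dots> = (\<Prod>b\<in>(Basis::'a set). (\<integral>\<^sup>+x. ennreal (std_normal_density x * exp (x\<^sup>2 / 4)) \<partial>lborel))"
    by (rule nn_integral_lborel_prod) auto
  also have "\<dots> = ennreal (sqrt 2) ^ DIM('a)" by (simp add: nn_quarter)
  also have "\<dots> = ennreal (sqrt 2 ^ DIM('a))" by (rule ennreal_power) simp
  finally show "(\<integral>\<^sup>+x. ennreal (exp ((norm (x::'a))\<^sup>2 / 4)) \<partial>gauss) < \<infinity>"
    by simp
qed

lemma exp_lin_quad: "exp (c * r) \<le> exp (c\<^sup>2) * exp (r\<^sup>2 / 4)" for c r :: real
proof -
  have "c * r \<le> c\<^sup>2 + r\<^sup>2 / 4"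
    using sum_squares_ge_zero[of "c - r/2" 0] by (simp add: power2_eq_square field_simps)
  then show ?thesis by (simp add: exp_add[symmetric])
qed

lemma integrable_gauss_bound:
  fixes f :: "'a::euclidean_space \<Rightarrow> 'b::{banach, second_countable_topology}"
  assumes [measurable]: "f \<in> borel_measurable borel"
    and b: "\<And>y. norm (f y) \<le> K * exp (c * norm y)"
  shows "integrable gauss f"
proof (rule Bochner_Integration.integrable_bound)
  show "integrable gauss (\<lambda>y::'a. (\<bar>K\<bar> * exp (c\<^sup>2)) * exp ((norm y)\<^sup>2 / 4))"
    using integrable_quarter by (rule integrable_mult_right)
  show "f \<in> borel_measurable gauss" by simp
  show "AE x in gauss. norm (f x) \<le> norm (\<bar>K\<bar> * exp (c\<^sup>2) * exp ((norm x)\<^sup>2 / 4))"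
  proof (rule AE_I2)
    fix x :: 'a
    have "norm (f x) \<le> \<bar>K\<bar> * exp (c * norm x)"
      using b[of x] by (smt (verit) exp_gt_zero mult_right_mono)
    also have "\<dots> \<le> \<bar>K\<bar> * (exp (c\<^sup>2) * exp ((norm x)\<^sup>2 / 4))"
      by (rule mult_left_mono[OF exp_lin_quad]) simp
    finally show "norm (f x) \<le> norm (\<bar>K\<bar> * exp (c\<^sup>2) * exp ((norm x)\<^sup>2 / 4))"
      by (simp add: mult.assoc)
  qed
qed



lemma gd_shift:
  fixes x v :: "'a::euclidean_space"
  shows "gauss_density (x - v) = gauss_density x * exp (v \<bullet> x - (norm v)\<^sup>2 / 2)"
proof -
  have "(norm (x - v))\<^sup>2 = (norm x)\<^sup>2 - 2 * (v \<bullet> x) + (norm v)\<^sup>2"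
    by (simp add: power2_norm_eq_inner inner_diff_left inner_diff_right inner_commute)
  then have "- (norm (x - v))\<^sup>2 / 2 = - (norm x)\<^sup>2 / 2 + (v \<bullet> x - (norm v)\<^sup>2 / 2)"
    by (simp add: field_simps)
  then have "exp (- (norm (x - v))\<^sup>2 / 2) = exp (- (norm x)\<^sup>2 / 2) * exp (v \<bullet> x - (norm v)\<^sup>2 / 2)"
    by (simp only: exp_add)
  then show ?thesis
    unfolding gauss_density_def by simp
qed

lemma lborel_shift:
  fixes v :: "'a::euclidean_space"
  shows "distr lborel borel (\<lambda>x. v + x) = (lborel :: 'a measure)"
proof -
  have "lborel = density (distr lborel borel (\<lambda>x. v + (1::real) *\<^sub>R x)) (\<lambda>_. ennreal (\<bar>1::real\<bar> ^ DIM('a)))"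
    by (rule lborel_affine) simp
  then show ?thesis by (simp add: density_1)
qed

lemma integral_lborel_shift:
  fixes v :: "'a::euclidean_space" and f :: "'a \<Rightarrow> real"
  assumes [measurable]: "f \<in> borel_measurable borel"
  shows "(\<integral>x. f (v + x) \<partial>lborel) = (\<integral>x. f x \<partial>lborel)"
proof -
  have "(\<integral>x. f x \<partial>lborel) = (\<integral>x. f x \<partial>(distr lborel borel (\<lambda>x. v + x)))"
    by (simp add: lborel_shift)
  also have "\<dots> = (\<integral>x. f (v + x) \<partial>lborel)"
    by (rule integral_distr) auto
  finally show ?thesis by simp
qed

lemma cameron_martin:
  fixes v :: "'a::euclidean_space" and f :: "'a \<Rightarrow> real"
  assumes [measurable]: "f \<in> borel_measurable borel"
  shows "(\<integral>z. f (z + v) \<partial>gauss) = (\<integral>y. f y * exp (v \<bullet> y - (norm v)\<^sup>2 / 2) \<partial>gauss)"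
proof -
  have "(\<integral>z. f (z + v) \<partial>gauss) = (\<integral>z. gauss_density z * f (z + v) \<partial>lborel)"
    unfolding gauss_def by (subst integral_density) (auto simp: gd_pos less_imp_le)
  also have "\<dots> = (\<integral>x. gauss_density (- v + x) * f (- v + x + v) \<partial>lborel)"
    by (rule integral_lborel_shift[symmetric]) simp
  also have "\<dots> = (\<integral>x. gauss_density x * (f x * exp (v \<bullet> x - (norm v)\<^sup>2 / 2)) \<partial>lborel)"
    using gd_shift by (intro Bochner_Integration.integral_cong) (auto simp: algebra_simps)
  also have "\<dots> = (\<integral>y. f y * exp (v \<bullet> y - (norm v)\<^sup>2 / 2) \<partial>gauss)"
    unfolding gauss_def by (subst integral_density) (auto simp: gd_pos less_imp_le)
  finally show ?thesis .
qed



lemma le_exp_self: "x \<le> exp (x::real)"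
  using exp_ge_add_one_self[of x] by linarith

lemma sq_le_exp: "0 \<le> x \<Longrightarrow> x\<^sup>2 / 2 \<le> exp (x::real)"
  using exp_lower_Taylor_quadratic[of x] by linarith

lemma exp_taylor2: "\<bar>exp s - 1 - s\<bar> \<le> exp \<bar>s\<bar> * s\<^sup>2 / 2" for s :: real
proof -
  obtain th where th: "\<bar>th\<bar> \<le> \<bar>s\<bar>" "exp s = (\<Sum>m<2. s ^ m / fact m) + exp th / fact 2 * s ^ 2"
    using Maclaurin_exp_le[of s 2] by blast
  have eq: "exp s - 1 - s = exp th * s\<^sup>2 / 2"
    using th(2) by (simp add: numeral_2_eq_2)
  have nn: "0 \<le> exp th * s\<^sup>2 / 2" by simp
  have "\<bar>exp s - 1 - s\<bar> = exp th * s\<^sup>2 / 2"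
    unfolding eq using nn by (rule abs_of_nonneg)
  moreover have "exp th \<le> exp \<bar>s\<bar>" using th(1) by simp
  ultimately show ?thesis
    by (simp add: mult_right_mono divide_right_mono)
qed

lemma pointwise_bound:
  fixes u y :: "'a::euclidean_space" and t R hy :: real
  assumes t: "\<bar>t\<bar> \<le> 1" and R: "R \<ge> 0" and hy: "\<bar>hy\<bar> \<le> R * norm y"
  shows "\<bar>hy * (exp ((t *\<^sub>R u) \<bullet> y - (norm (t *\<^sub>R u))\<^sup>2 / 2) - 1 - t * (u \<bullet> y))\<bar>
     \<le> t\<^sup>2 * ((2 * R * exp (2 * (norm u)\<^sup>2)) * exp ((1 + 2 * norm u) * norm y))"
proof -
  define s where "s = (t *\<^sub>R u) \<bullet> y - (norm (t *\<^sub>R u))\<^sup>2 / 2"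
  define M where "M = norm u * norm y + (norm u)\<^sup>2"
  have M0: "M \<ge> 0" by (simp add: M_def)
  have s_eq: "s = t * (u \<bullet> y) - t\<^sup>2 * (norm u)\<^sup>2 / 2"
    by (simp add: s_def power_mult_distrib)
  have uy: "\<bar>u \<bullet> y\<bar> \<le> norm u * norm y" by (rule Cauchy_Schwarz_ineq2)
  have t2: "t\<^sup>2 \<le> \<bar>t\<bar>" using t mult_left_le[of "\<bar>t\<bar>" "\<bar>t\<bar>"] by (simp add: power2_eq_square)
  have "\<bar>s\<bar> \<le> \<bar>t\<bar> * M"
  proof -
    have "\<bar>t * (u \<bullet> y)\<bar> \<le> \<bar>t\<bar> * (norm u * norm y)"
      by (simp add: abs_mult mult_left_mono uy)
    moreover have "\<bar>t\<^sup>2 * (norm u)\<^sup>2 / 2\<bar> \<le> \<bar>t\<bar> * (norm u)\<^sup>2"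
    proof -
      have a: "t\<^sup>2 * (norm u)\<^sup>2 \<le> \<bar>t\<bar> * (norm u)\<^sup>2" using t2 by (simp add: mult_right_mono)
      have "0 \<le> t\<^sup>2 * (norm u)\<^sup>2" by simp
      then have "\<bar>t\<^sup>2 * (norm u)\<^sup>2 / 2\<bar> = t\<^sup>2 * (norm u)\<^sup>2 / 2" by simp
      then show ?thesis using a \<open>0 \<le> t\<^sup>2 * (norm u)\<^sup>2\<close> by linarith
    qed
    ultimately show ?thesis unfolding s_eq M_def distrib_left
      using abs_triangle_ineq4[of "t * (u \<bullet> y)" "t\<^sup>2 * (norm u)\<^sup>2 / 2"] by linarith
  qed
  then have sM: "\<bar>s\<bar> \<le> M" using t M0 by (smt (verit) mult_right_mono mult_left_le_one_le abs_ge_zero)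
  have s2: "s\<^sup>2 \<le> t\<^sup>2 * M\<^sup>2"
  proof -
    have "s\<^sup>2 = \<bar>s\<bar>\<^sup>2" by simp
    also have "\<dots> \<le> (\<bar>t\<bar> * M)\<^sup>2" using \<open>\<bar>s\<bar> \<le> \<bar>t\<bar> * M\<close> by (intro power_mono) auto
    finally show ?thesis by (simp add: power_mult_distrib)
  qed
  have e1: "\<bar>exp s - 1 - s\<bar> \<le> t\<^sup>2 * exp (2 * M)"
  proof -
    have "\<bar>exp s - 1 - s\<bar> \<le> exp \<bar>s\<bar> * s\<^sup>2 / 2" by (rule exp_taylor2)
    also have "\<dots> \<le> exp M * (t\<^sup>2 * M\<^sup>2) / 2"
      using sM s2 by (intro divide_right_mono mult_mono) auto
    also have "\<dots> = t\<^sup>2 * (exp M * (M\<^sup>2 / 2))" by simp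
    also have "\<dots> \<le> t\<^sup>2 * (exp M * exp M)"
      using sq_le_exp[OF M0] by (intro mult_left_mono) auto
    also have "\<dots> = t\<^sup>2 * exp (2 * M)" by (simp add: exp_add[symmetric])
    finally show ?thesis .
  qed
  have e2: "\<bar>t\<^sup>2 * (norm u)\<^sup>2 / 2\<bar> \<le> t\<^sup>2 * exp (2 * M)"
  proof -
    have "(norm u)\<^sup>2 / 2 \<le> M" unfolding M_def by simp
    also have "\<dots> \<le> exp (2 * M)" using le_exp_self[of "2*M"] M0 by linarith
    finally have b: "(norm u)\<^sup>2 / 2 \<le> exp (2 * M)" .
    have "t\<^sup>2 * ((norm u)\<^sup>2 / 2) \<le> t\<^sup>2 * exp (2 * M)" using b by (rule mult_left_mono) simp
    moreover have "\<bar>t\<^sup>2 * (norm u)\<^sup>2 / 2\<bar> = t\<^sup>2 * ((norm u)\<^sup>2 / 2)" by simp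
    ultimately show ?thesis by linarith
  qed
  have "exp s - 1 - t * (u \<bullet> y) = (exp s - 1 - s) - t\<^sup>2 * (norm u)\<^sup>2 / 2"
    by (simp add: s_eq)
  then have e3: "\<bar>exp s - 1 - t * (u \<bullet> y)\<bar> \<le> 2 * t\<^sup>2 * exp (2 * M)"
    using e1 e2 by linarith
  have hy': "\<bar>hy\<bar> \<le> R * exp (norm y)"
    using hy le_exp_self[of "norm y"] R by (smt (verit) mult_left_mono)
  have "\<bar>hy * (exp s - 1 - t * (u \<bullet> y))\<bar> \<le> R * exp (norm y) * (2 * t\<^sup>2 * exp (2 * M))"
    unfolding abs_mult using hy' e3 by (intro mult_mono) auto
  also have "\<dots> = t\<^sup>2 * ((2 * R * exp (2 * (norm u)\<^sup>2)) * exp ((1 + 2 * norm u) * norm y))"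
    unfolding M_def by (simp add: exp_add[symmetric] algebra_simps)
  finally show ?thesis unfolding s_def .
qed



lemma taylor:
  fixes A :: "'a::euclidean_space set" and u :: 'a
  assumes "bounded A" "A \<noteq> {}"
  shows "\<exists>C. \<forall>t. \<bar>t\<bar> \<le> 1 \<longrightarrow>
     \<bar>(\<integral>z. supp A (z + t *\<^sub>R u) \<partial>gauss) - (\<integral>z. supp A z \<partial>gauss) - t * (u \<bullet> center A)\<bar> \<le> C * t\<^sup>2"
proof -
  obtain R0 where R0: "\<forall>a\<in>A. norm a \<le> R0" using assms(1) bounded_iff by blast
  define R where "R = max R0 0"
  have R: "\<And>a. a \<in> A \<Longrightarrow> norm a \<le> R" "R \<ge> 0" using R0 by (auto simp: R_def)
  have hb: "\<And>y. \<bar>supp A y\<bar> \<le> R * norm y" by (rule supp_bound[OF assms R(1)])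
  have hm[measurable]: "supp A \<in> borel_measurable borel" by (rule supp_meas[OF assms])
  define G where "G y = (2 * R * exp (2 * (norm u)\<^sup>2)) * exp ((1 + 2 * norm u) * norm y)" for y :: 'a
  have G0: "G y \<ge> 0" for y using R(2) by (simp add: G_def)
  have iG: "integrable gauss G"
    by (rule integrable_gauss_bound[where K="2 * R * exp (2 * (norm u)\<^sup>2)" and c="1 + 2 * norm u"])
      (use G0 in \<open>auto simp: G_def[abs_def]\<close>)
  have ih: "integrable gauss (supp A)"
  proof (rule integrable_gauss_bound[where K=R and c=1])
    fix y :: 'a
    show "norm (supp A y) \<le> R * exp (1 * norm y)"
      using hb[of y] le_exp_self[of "norm y"] R(2) by (smt (verit) mult_left_mono real_norm_def)
  qed simp
  have iz: "integrable gauss (\<lambda>y. supp A y *\<^sub>R y)"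
  proof (rule integrable_gauss_bound[where K="2 * R" and c=1])
    fix y :: 'a
    have "norm (supp A y *\<^sub>R y) = \<bar>supp A y\<bar> * norm y" by simp
    also have "\<dots> \<le> R * norm y * norm y" using hb[of y] by (simp add: mult_right_mono)
    also have "\<dots> = 2 * R * ((norm y)\<^sup>2 / 2)" by (simp add: power2_eq_square)
    also have "\<dots> \<le> 2 * R * exp (norm y)" using sq_le_exp[of "norm y"] R(2)
      by (intro mult_left_mono) auto
    finally show "norm (supp A y *\<^sub>R y) \<le> 2 * R * exp (1 * norm y)" by simp
  qed simp
  have iu: "integrable gauss (\<lambda>y. supp A y * (u \<bullet> y))"
  proof -
    have "integrable gauss (\<lambda>y. u \<bullet> (supp A y *\<^sub>R y))"
      using iz by (rule integrable_inner_right)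
    then show ?thesis by simp
  qed
  have cen: "u \<bullet> center A = (\<integral>y. supp A y * (u \<bullet> y) \<partial>gauss)"
  proof -
    have "u \<bullet> center A = (\<integral>y. u \<bullet> (supp A y *\<^sub>R y) \<partial>gauss)"
      unfolding center_def using iz by (intro integral_inner_right[symmetric])
    then show ?thesis by simp
  qed
  show ?thesis
  proof (rule exI[of _ "integral\<^sup>L gauss G"], intro allI impI)
    fix t :: real assume t: "\<bar>t\<bar> \<le> 1"
    define s where "s y = (t *\<^sub>R u) \<bullet> y - (norm (t *\<^sub>R u))\<^sup>2 / 2" for y :: 'a
    define F where "F y = supp A y * (exp (s y) - 1 - t * (u \<bullet> y))" for y :: 'a
    have Fb: "\<bar>F y\<bar> \<le> t\<^sup>2 * G y" for y
      unfolding F_def s_def G_def by (rule pointwise_bound[OF t R(2) hb])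
    have Fm[measurable]: "F \<in> borel_measurable borel" unfolding F_def s_def by measurable
    have iF: "integrable gauss F"
    proof (rule Bochner_Integration.integrable_bound)
      show "integrable gauss (\<lambda>y. t\<^sup>2 * G y)" using iG by (rule integrable_mult_right)
      show "F \<in> borel_measurable gauss" by simp
      show "AE y in gauss. norm (F y) \<le> norm (t\<^sup>2 * G y)"
        using Fb G0 by (intro AE_I2) (simp add: abs_mult)
    qed
    have "(\<integral>z. supp A (z + t *\<^sub>R u) \<partial>gauss) = (\<integral>y. supp A y * exp (s y) \<partial>gauss)"
      unfolding s_def by (rule cameron_martin) simp
    also have "\<dots> = (\<integral>y. F y + supp A y + t * (supp A y * (u \<bullet> y)) \<partial>gauss)"
      by (intro Bochner_Integration.integral_cong) (auto simp: F_def algebra_simps)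
    also have "\<dots> = (\<integral>y. F y \<partial>gauss) + (\<integral>y. supp A y \<partial>gauss) + t * (\<integral>y. supp A y * (u \<bullet> y) \<partial>gauss)"
      using iF ih iu by (simp add: Bochner_Integration.integral_add integrable_mult_right)
    finally have eq: "(\<integral>z. supp A (z + t *\<^sub>R u) \<partial>gauss) - (\<integral>z. supp A z \<partial>gauss) - t * (u \<bullet> center A)
        = (\<integral>y. F y \<partial>gauss)" unfolding cen by simp
    have "\<bar>\<integral>y. F y \<partial>gauss\<bar> \<le> (\<integral>y. \<bar>F y\<bar> \<partial>gauss)" by (rule integral_abs_bound)
    also have "\<dots> \<le> (\<integral>y. t\<^sup>2 * G y \<partial>gauss)"
      using iF iG Fb by (intro integral_mono) (auto intro: integrable_mult_right)
    also have "\<dots> = integral\<^sup>L gauss G * t\<^sup>2" by simp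
    finally show "\<bar>(\<integral>z. supp A (z + t *\<^sub>R u) \<partial>gauss) - (\<integral>z. supp A z \<partial>gauss) - t * (u \<bullet> center A)\<bar>
        \<le> integral\<^sup>L gauss G * t\<^sup>2" unfolding eq .
  qed
qed



lemma small_t:
  fixes x y C :: real
  assumes "\<And>t. 0 < t \<Longrightarrow> t \<le> 1 \<Longrightarrow> x \<le> y + C * t"
  shows "x \<le> y"
proof (rule ccontr)
  assume "\<not> x \<le> y"
  define t where "t = min 1 ((x - y) / (2 * (\<bar>C\<bar> + 1)))"
  have t0: "0 < t" "t \<le> 1" using \<open>\<not> x \<le> y\<close> by (auto simp: t_def)
  have "t \<le> (x - y) / (2 * (\<bar>C\<bar> + 1))" by (simp add: t_def)
  then have a: "t * (2 * (\<bar>C\<bar> + 1)) \<le> x - y" by (simp add: pos_le_divide_eq)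
  have b: "C * t \<le> \<bar>C\<bar> * t" using t0 by (simp add: mult_right_mono)
  have c: "x \<le> y + C * t" using assms t0 by blast
  have d: "t * (2 * (\<bar>C\<bar> + 1)) = 2 * (\<bar>C\<bar> * t) + 2 * t" by (simp add: algebra_simps)
  have e: "0 \<le> \<bar>C\<bar> * t" using t0 by simp
  show False using a b c d e t0 by linarith
qed

lemma supp_bounds:
  fixes A :: "'a::euclidean_space set"
  assumes "bounded A" "A \<noteq> {}"
  obtains R where "R \<ge> 0" "\<And>y. \<bar>supp A y\<bar> \<le> R * norm y"
proof -
  obtain R0 where R0: "\<forall>a\<in>A. norm a \<le> R0" using assms(1) bounded_iff by blast
  define R where "R = max R0 0"
  have R: "\<And>a. a \<in> A \<Longrightarrow> norm a \<le> R" "R \<ge> 0" using R0 by (auto simp: R_def)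
  show ?thesis using that[OF R(2) supp_bound[OF assms R(1)]] .
qed

lemma integrable_shift:
  fixes A :: "'a::euclidean_space set"
  assumes "bounded A" "A \<noteq> {}"
  shows "integrable gauss (\<lambda>z. supp A (z + v))"
proof -
  obtain R where R: "R \<ge> 0" "\<And>y. \<bar>supp A y\<bar> \<le> R * norm y" using supp_bounds[OF assms] by blast
  have [measurable]: "supp A \<in> borel_measurable borel" by (rule supp_meas[OF assms])
  show ?thesis
  proof (rule integrable_gauss_bound[where K="R * exp (norm v)" and c=1])
    fix z :: 'a
    have "\<bar>supp A (z + v)\<bar> \<le> R * norm (z + v)" by (rule R(2))
    also have "\<dots> \<le> R * (norm z + norm v)" using R(1) norm_triangle_ineq by (intro mult_left_mono)
    also have "\<dots> \<le> R * exp (norm z + norm v)" using R(1) le_exp_self by (simp add: mult_left_mono)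
    finally show "norm (supp A (z + v)) \<le> R * exp (norm v) * exp (1 * norm z)"
      by (simp add: exp_add mult_ac)
  qed simp
qed

lemma integrable_supp_prod:
  fixes A B :: "'a::euclidean_space set"
  assumes "bounded A" "A \<noteq> {}" "bounded B" "B \<noteq> {}"
  shows "integrable gauss (\<lambda>x. supp A x * supp B x)"
proof -
  obtain R where R: "R \<ge> 0" "\<And>y. \<bar>supp A y\<bar> \<le> R * norm y" using supp_bounds[OF assms(1,2)] by blast
  obtain S where S: "S \<ge> 0" "\<And>y. \<bar>supp B y\<bar> \<le> S * norm y" using supp_bounds[OF assms(3,4)] by blast
  have [measurable]: "supp A \<in> borel_measurable borel" by (rule supp_meas[OF assms(1,2)])
  have [measurable]: "supp B \<in> borel_measurable borel" by (rule supp_meas[OF assms(3,4)])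
  show ?thesis
  proof (rule integrable_gauss_bound[where K="2 * R * S" and c=1])
    fix y :: 'a
    have "\<bar>supp A y * supp B y\<bar> \<le> (R * norm y) * (S * norm y)"
      unfolding abs_mult using R S by (intro mult_mono) auto
    also have "\<dots> = 2 * R * S * ((norm y)\<^sup>2 / 2)" by (simp add: power2_eq_square)
    also have "\<dots> \<le> 2 * R * S * exp (norm y)" using sq_le_exp[of "norm y"] R(1) S(1)
      by (intro mult_left_mono) auto
    finally show "norm (supp A y * supp B y) \<le> 2 * R * S * exp (1 * norm y)" by simp
  qed simp
qed

lemma integral_plus_const:
  assumes "integrable gauss (f :: 'a::euclidean_space \<Rightarrow> real)"
  shows "(\<integral>z. f z + c \<partial>gauss) = (\<integral>z. f z \<partial>gauss) + c"
proof -
  interpret prob_space "gauss :: 'a measure" by (rule prob_gauss)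
  have "prob UNIV = 1" using prob_space by simp
  then show ?thesis using assms by (simp add: Bochner_Integration.integral_add)
qed

lemma integrable_gauss_const: "integrable (gauss :: 'a::euclidean_space measure) (\<lambda>_. c :: real)"
proof -
  interpret prob_space "gauss :: 'a measure" by (rule prob_gauss)
  show ?thesis by simp
qed

lemma steiner_support:
  fixes A :: "'a::euclidean_space set"
  assumes "bounded A" "A \<noteq> {}"
  shows "u \<bullet> center A \<le> supp A u"
proof -
  obtain C where C: "\<And>t. \<bar>t\<bar> \<le> 1 \<Longrightarrow>
     \<bar>(\<integral>z. supp A (z + t *\<^sub>R u) \<partial>gauss) - (\<integral>z. supp A z \<partial>gauss) - t * (u \<bullet> center A)\<bar> \<le> C * t\<^sup>2"
    using taylor[OF assms, of u] by blast
  have [measurable]: "supp A \<in> borel_measurable borel" by (rule supp_meas[OF assms])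
  have ih: "integrable gauss (supp A)" using integrable_shift[OF assms, of 0] by simp
  show ?thesis
  proof (rule small_t[where C=C])
    fix t :: real assume t: "0 < t" "t \<le> 1"
    have "(\<integral>z. supp A (z + t *\<^sub>R u) \<partial>gauss) \<le> (\<integral>z. supp A z + t * supp A u \<partial>gauss)"
    proof (rule integral_mono)
      show "integrable gauss (\<lambda>z. supp A (z + t *\<^sub>R u))" by (rule integrable_shift[OF assms])
      show "integrable gauss (\<lambda>z. supp A z + t * supp A u)"
        using ih integrable_gauss_const by (intro Bochner_Integration.integrable_add) auto
      fix z :: 'a
      show "supp A (z + t *\<^sub>R u) \<le> supp A z + t * supp A u"
        using supp_add[OF assms, of z "t *\<^sub>R u"] supp_scale[OF assms, of t u] t by simp
    qed
    also have "\<dots> = (\<integral>z. supp A z \<partial>gauss) + t * supp A u"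
      by (rule integral_plus_const[OF ih])
    finally have I: "(\<integral>z. supp A (z + t *\<^sub>R u) \<partial>gauss) \<le> (\<integral>z. supp A z \<partial>gauss) + t * supp A u" .
    have "\<bar>t\<bar> \<le> 1" using t by simp
    from C[OF this] have "- (C * t\<^sup>2) \<le> (\<integral>z. supp A (z + t *\<^sub>R u) \<partial>gauss) - (\<integral>z. supp A z \<partial>gauss) - t * (u \<bullet> center A)"
      by (simp only: abs_le_iff) linarith
    then have "t * (u \<bullet> center A) \<le> t * supp A u + C * t\<^sup>2"
      using I by linarith
    then have "t * (u \<bullet> center A) \<le> t * (supp A u + C * t)"
      by (simp add: algebra_simps power2_eq_square)
    then show "u \<bullet> center A \<le> supp A u + C * t" using t by simp
  qed
qed

lemma steiner_in:
  fixes A :: "'a::euclidean_space set"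
  assumes "convex_body A"
  shows "center A \<in> A"
proof (rule ccontr)
  assume nin: "center A \<notin> A"
  have A: "convex A" "compact A" "A \<noteq> {}" using assms by (auto simp: convex_body_def)
  then have "closed A" "bounded A" by (auto simp: compact_eq_bounded_closed)
  obtain a b where ab: "a \<bullet> center A < b" "\<forall>x\<in>A. b < a \<bullet> x"
    using separating_hyperplane_closed_point[OF A(1) \<open>closed A\<close> nin] by blast
  have "supp A (-a) \<le> - b"
  proof (rule supp_least[OF A(3)])
    fix x assume "x \<in> A"
    then have "b < a \<bullet> x" using ab by blast
    then show "x \<bullet> - a \<le> - b" by (simp add: inner_commute)
  qed
  moreover have "(-a) \<bullet> center A \<le> supp A (-a)" by (rule steiner_support[OF \<open>bounded A\<close> A(3)])
  ultimately show False using ab(1) by simp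
qed



lemma cont_AE_zero:
  fixes f :: "'a::euclidean_space \<Rightarrow> real"
  assumes cont: "continuous_on UNIV f" and ae: "AE x in gauss. f x = 0"
  shows "f x = 0"
proof -
  have "AE x in lborel. 0 < ennreal (gauss_density x) \<longrightarrow> f x = 0"
    using ae unfolding gauss_def by (subst (asm) AE_density) auto
  then have "AE x in lborel. f x = 0" using gd_pos by (auto elim!: AE_mp)
  then have "AE x in lebesgue. f x = 0" by (rule AE_completion)
  then obtain N where N: "{x \<in> space lebesgue. \<not> f x = 0} \<subseteq> N" "N \<in> null_sets lebesgue"
    by (rule AE_E) (blast intro: null_setsI)
  let ?S = "{x. f x \<noteq> 0}"
  have "open ?S"
  proof -
    have "open (f -` (- {0}))" using cont by (intro open_vimage) auto
    moreover have "f -` (- {0}) = ?S" by auto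
    ultimately show ?thesis by simp
  qed
  moreover have "negligible ?S"
  proof -
    have "negligible N" using N(2) negligible_iff_null_sets by blast
    moreover have "?S \<subseteq> N" using N(1) by auto
    ultimately show ?thesis using negligible_subset by blast
  qed
  ultimately have "?S = {}" using open_not_negligible by blast
  then show ?thesis by auto
qed

lemma nonneg_int_zero:
  fixes f :: "'a::euclidean_space \<Rightarrow> real"
  assumes "continuous_on UNIV f" "integrable gauss f" "\<And>x. f x \<ge> 0" "(\<integral>x. f x \<partial>gauss) = 0"
  shows "f x = 0"
proof (rule cont_AE_zero[OF assms(1)])
  show "AE x in gauss. f x = 0"
    using integral_nonneg_eq_0_iff_AE[of gauss f] assms(2-4) by auto
qed

lemma supp_nonneg:
  fixes A :: "'a::euclidean_space set"
  assumes "bounded A" "0 \<in> A"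
  shows "supp A x \<ge> 0"
  using supp_upper[OF assms, of x] by simp

lemma centered_zero_sym:
  fixes A :: "'a::euclidean_space set"
  assumes cb: "convex_body A" and c0: "center A = 0" and hu: "supp A u = 0"
  shows "supp A (- u) = 0"
proof -
  have A: "bounded A" "A \<noteq> {}" using cb by (auto simp: convex_body_def compact_eq_bounded_closed)
  have "0 \<in> A" using steiner_in[OF cb] c0 by simp
  have hm[measurable]: "supp A \<in> borel_measurable borel" by (rule supp_meas[OF A])
  have ih: "integrable gauss (supp A)" using integrable_shift[OF A, of 0] by simp
  have ihu: "integrable gauss (\<lambda>z. supp A (z + v))" for v by (rule integrable_shift[OF A])
  obtain C where C: "\<And>t. \<bar>t\<bar> \<le> 1 \<Longrightarrow>
     \<bar>(\<integral>z. supp A (z + t *\<^sub>R u) \<partial>gauss) - (\<integral>z. supp A z \<partial>gauss) - t * (u \<bullet> center A)\<bar> \<le> C * t\<^sup>2"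
    using taylor[OF A, of u] by blast
  define D where "D z = supp A z - supp A (z + u)" for z
  have D0: "D z \<ge> 0" for z
    using supp_add[OF A, of z u] hu by (simp add: D_def)
  have iD: "integrable gauss D" unfolding D_def using ih ihu by (rule Bochner_Integration.integrable_diff)
  have "(\<integral>z. D z \<partial>gauss) \<le> 0"
  proof (rule small_t[where C=C])
    fix t :: real assume t: "0 < t" "t \<le> 1"
    have key: "t * D z \<le> supp A z - supp A (z + t *\<^sub>R u)" for z
    proof -
      have "z + t *\<^sub>R u = (1 - t) *\<^sub>R z + t *\<^sub>R (z + u)" by (simp add: algebra_simps)
      then have "supp A (z + t *\<^sub>R u) \<le> supp A ((1 - t) *\<^sub>R z) + supp A (t *\<^sub>R (z + u))"
        using supp_add[OF A] by metis
      also have "\<dots> = (1 - t) * supp A z + t * supp A (z + u)"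
        using supp_scale[OF A] t by simp
      finally show ?thesis by (simp add: D_def algebra_simps)
    qed
    have "t * (\<integral>z. D z \<partial>gauss) = (\<integral>z. t * D z \<partial>gauss)" by simp
    also have "\<dots> \<le> (\<integral>z. supp A z - supp A (z + t *\<^sub>R u) \<partial>gauss)"
      using key iD ih ihu by (intro integral_mono) (auto intro: Bochner_Integration.integrable_diff)
    also have "\<dots> = (\<integral>z. supp A z \<partial>gauss) - (\<integral>z. supp A (z + t *\<^sub>R u) \<partial>gauss)"
      using ih ihu by (rule Bochner_Integration.integral_diff)
    also have "\<dots> \<le> C * t\<^sup>2"
    proof -
      have "\<bar>t\<bar> \<le> 1" using t by simp
      from C[OF this] show ?thesis using c0 by (simp only: abs_le_iff) simp
    qed
    finally have "t * (\<integral>z. D z \<partial>gauss) \<le> t * (0 + C * t)" by (simp add: power2_eq_square mult_ac)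
    then show "(\<integral>z. D z \<partial>gauss) \<le> 0 + C * t" using t by simp
  qed
  moreover have "(\<integral>z. D z \<partial>gauss) \<ge> 0" using D0 by simp
  ultimately have "(\<integral>z. D z \<partial>gauss) = 0" by simp
  moreover have "continuous_on UNIV D"
  proof -
    have "continuous_on UNIV (\<lambda>x. supp A (x + u))"
      by (rule continuous_on_compose2[OF supp_cont[OF A]]) (auto intro: continuous_intros)
    then show ?thesis unfolding D_def using supp_cont[OF A] by (intro continuous_intros)
  qed
  ultimately have "D (- u) = 0" using nonneg_int_zero[OF _ iD D0] by blast
  then show ?thesis using supp_zero[OF A] by (simp add: D_def)
qed



lemma part2:
  fixes A B :: "'a::euclidean_space set"
  assumes cA: "convex_body A" and cB: "convex_body B" and kA: "center A = 0" and kB: "center B = 0"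
  shows "set_inner A B = 0 \<longleftrightarrow> A = {0} \<or> B = {0}"
proof
  have A: "bounded A" "A \<noteq> {}" using cA by (auto simp: convex_body_def compact_eq_bounded_closed)
  have B: "bounded B" "B \<noteq> {}" using cB by (auto simp: convex_body_def compact_eq_bounded_closed)
  have 0: "0 \<in> A" "0 \<in> B" using steiner_in[OF cA] steiner_in[OF cB] kA kB by auto
  have nA: "supp A x \<ge> 0" for x by (rule supp_nonneg[OF A(1) 0(1)])
  have nB: "supp B x \<ge> 0" for x by (rule supp_nonneg[OF B(1) 0(2)])
  assume si: "set_inner A B = 0"
  show "A = {0} \<or> B = {0}"
  proof (rule ccontr)
    assume "\<not> (A = {0} \<or> B = {0})"
    then have "A \<noteq> {0}" "B \<noteq> {0}" by auto
    then obtain a b where ab: "a \<in> A" "a \<noteq> 0" "b \<in> B" "b \<noteq> 0" using 0 by blast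
    have pa: "supp A a > 0"
      using supp_upper[OF A(1) ab(1), of a] ab(2) by (smt (verit) inner_gt_zero_iff)
    have pb: "supp B b > 0"
      using supp_upper[OF B(1) ab(3), of b] ab(4) by (smt (verit) inner_gt_zero_iff)
    obtain x0 where x0: "supp A x0 > 0" "supp B x0 > 0"
    proof (cases "supp B a > 0")
      case True then show ?thesis using that pa by blast
    next
      case Fa: False
      show ?thesis
      proof (cases "supp A b > 0")
        case True then show ?thesis using that pb by blast
      next
        case False
        then have "supp A b = 0" "supp B a = 0" using nA[of b] nB[of a] Fa by auto
        then have z: "supp A (- b) = 0" "supp B (- a) = 0"
          using centered_zero_sym[OF cA kA] centered_zero_sym[OF cB kB] by auto
        have "supp A a \<le> supp A (a + b) + supp A (- b)"
          using supp_add[OF A, of "a + b" "- b"] by simp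
        moreover have "supp B b \<le> supp B (a + b) + supp B (- a)"
          using supp_add[OF B, of "a + b" "- a"] by simp
        ultimately show ?thesis using that[of "a + b"] z pa pb by simp
      qed
    qed
    let ?f = "\<lambda>x. supp A x * supp B x"
    have "continuous_on UNIV ?f"
      using supp_cont[OF A] supp_cont[OF B] by (intro continuous_intros)
    moreover have "integrable gauss ?f" by (rule integrable_supp_prod[OF A B])
    moreover have "\<And>x. ?f x \<ge> 0" using nA nB by simp
    moreover have "(\<integral>x. ?f x \<partial>gauss) = 0" using si by (simp add: set_inner_def)
    ultimately have "?f x0 = 0" by (rule nonneg_int_zero)
    then show False using x0 by simp
  qed
next
  assume "A = {0} \<or> B = {0}"
  then have z: "(\<lambda>x. supp A x * supp B x) = (\<lambda>x. 0)" by (auto simp: supp_def)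
  show "set_inner A B = 0" unfolding set_inner_def z by simp
qed

lemma part3:
  fixes A B :: "'a::euclidean_space set"
  assumes cA: "convex_body A" and cB: "convex_body B" and 0: "0 \<in> A" and sub: "A \<subseteq> B"
  shows "set_inner A A \<le> set_inner B B"
proof -
  have A: "bounded A" "A \<noteq> {}" using cA by (auto simp: convex_body_def compact_eq_bounded_closed)
  have B: "bounded B" "B \<noteq> {}" using cB by (auto simp: convex_body_def compact_eq_bounded_closed)
  have nA: "supp A x \<ge> 0" for x by (rule supp_nonneg[OF A(1) 0])
  have le: "supp A x \<le> supp B x" for x
    using A(2) by (rule supp_least) (use supp_upper[OF B(1)] sub in blast)
  show ?thesis unfolding set_inner_def
  proof (rule integral_mono)
    show "integrable gauss (\<lambda>x. supp A x * supp A x)" by (rule integrable_supp_prod[OF A A])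
    show "integrable gauss (\<lambda>x. supp B x * supp B x)" by (rule integrable_supp_prod[OF B B])
    fix x :: 'a
    show "supp A x * supp A x \<le> supp B x * supp B x"
      using nA[of x] le[of x] by (intro mult_mono) auto
  qed
qed

theorem proposition6:
  fixes dummy :: "'a::euclidean_space"
  shows "(\<forall>A::'a set. convex_body A \<longrightarrow> center A \<in> A)
    \<and> (\<forall>A B::'a set. convex_body A \<and> convex_body B \<and> center A = 0 \<and> center B = 0 \<longrightarrow>
          (set_inner A B = 0 \<longleftrightarrow> A = {0} \<or> B = {0}))
    \<and> (\<forall>A B::'a set. convex_body A \<and> convex_body B \<and> 0 \<in> A \<and> A \<subseteq> B \<longrightarrow>
          set_inner A A \<le> set_inner B B)"
  using steiner_in part2 part3 by blast

end
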